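(* Let $N$ and $L$ be integers with $1\le L\le N-1$ and let $\hat\alpha>0$. Let $z,y$ be independent random variables with $z\sim\mathrm{Gamma}(N-L,1)$ and $y\sim\mathrm{Gamma}(L,1)$, and set $X=\hat\alpha z/y$. Then $$\mathbb{E}\left[\ln(1+X)\right]=\sum_{i=0}^{N-L-1}\binom{L+i-1}{i}\hat{\alpha}^L\,I_2(\hat{\alpha},i,L+i).$$
   Context: $\mathrm{Gamma}(n,1)$ denotes the distribution with density $t^{n-1}e^{-t}/(n-1)!$ on $t>0$ (its CDF is $1-e^{-t}\sum_{i=0}^{n-1}t^i/i!$). For $a>0$ and nonnegative integers $m,n$ with $n\ge m+1$, define $$I_2(a,m,n)=\int_0^\infty\frac{x^m}{(x+a)^n(x+1)}\,dx.$$ *)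

theory Defs
  imports "HOL-Probability.Probability"
begin

definition I2 :: "real \<Rightarrow> nat \<Rightarrow> nat \<Rightarrow> real" where
  "I2 a m n = (LBINT x:{0<..}. x ^ m / ((x + a) ^ n * (x + 1)))"

end

theory Submission
  imports Defs
begin


lemma lnA:
  fixes x :: real assumes x: "0 \<le> x"
  shows "(\<integral>\<^sup>+t. ennreal (1/(1+t)) * (if 0 < t \<and> t < x then 1 else 0) \<partial>lborel) = ennreal (ln (1+x))"
proof -
  have "(\<integral>\<^sup>+t. ennreal (1/(1+t)) * (if 0 < t \<and> t < x then 1 else 0) \<partial>lborel)
      = (\<integral>\<^sup>+t. ennreal (1/(1+t)) * indicator {0..x} t \<partial>lborel)"
    apply (intro nn_integral_cong_AE)
    using AE_lborel_singleton[of 0] AE_lborel_singleton[of x]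
    by eventually_elim (auto simp: indicator_def)
  also have "\<dots> = ln (1+x) - ln (1+0)"
    apply (rule nn_integral_FTC_Icc)
    using x by (auto intro!: derivative_eq_intros)
  finally show ?thesis by simp
qed

lemma ccdfB:
  fixes c :: real assumes c: "0 \<le> c"
  shows "(\<integral>\<^sup>+a. ennreal (erlang_density k 1 a) * indicator {c<..} a \<partial>lborel)
     = ennreal (\<Sum>i\<le>k. c^i * exp(-c) / fact i)"
proof -
  let ?S = "\<Sum>i\<le>k. c^i * exp(-c) / fact i"
  have tot: "(\<integral>\<^sup>+a. ennreal (erlang_density k 1 a) \<partial>lborel) = 1"
    using nn_integral_erlang_ith_moment[of 1 k 0] by simp
  have "(\<integral>\<^sup>+a. ennreal (erlang_density k 1 a) \<partial>lborel) =
     (\<integral>\<^sup>+a. ennreal (erlang_density k 1 a) * indicator {..c} a + ennreal (erlang_density k 1 a) * indicator {c<..} a \<partial>lborel)"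
    by (intro nn_integral_cong) (auto simp: indicator_def)
  also have "\<dots> = (\<integral>\<^sup>+a. ennreal (erlang_density k 1 a) * indicator {..c} a \<partial>lborel) +
     (\<integral>\<^sup>+a. ennreal (erlang_density k 1 a) * indicator {c<..} a \<partial>lborel)"
    by (intro nn_integral_add) auto
  also have "(\<integral>\<^sup>+a. ennreal (erlang_density k 1 a) * indicator {..c} a \<partial>lborel) = ennreal (1 - ?S)"
    using nn_integral_erlang_density[of 1 k c] c by (simp add: erlang_CDF_def)
  finally have eq: "1 = ennreal (1 - ?S) + (\<integral>\<^sup>+a. ennreal (erlang_density k 1 a) * indicator {c<..} a \<partial>lborel)"
    using tot by simp
  have S0: "0 \<le> ?S" using c by (intro sum_nonneg divide_nonneg_nonneg mult_nonneg_nonneg zero_le_power) auto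
  have S1: "?S \<le> 1" using erlang_CDF_nonneg[of 1 k c] c by (simp add: erlang_CDF_def)
  let ?X = "(\<integral>\<^sup>+a. ennreal (erlang_density k 1 a) * indicator {c<..} a \<partial>lborel)"
  have "?X = (ennreal (1 - ?S) + ?X) - ennreal (1 - ?S)" by simp
  also have "\<dots> = 1 - ennreal (1 - ?S)" using eq by simp
  also have "\<dots> = ennreal ?S" using S0 S1 ennreal_minus[of "1 - ?S" 1] by simp
  finally show ?thesis .
qed



lemma termeq:
  fixes b s :: real and l i :: nat
  assumes "0 \<le> b" "0 \<le> s"
  shows "b^l * exp(-b) / fact l * ((s*b)^i * exp(-(s*b)) / fact i) =
    real ((l + i) choose i) * s^i / (1+s)^(Suc l + i) * ((1+s)^(Suc (l+i)) * b^(l+i) * exp(-(1+s)*b) / fact (l+i))"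
proof -
  let ?P = "(1+s)^(Suc (l+i))"
  have c: "real ((l + i) choose i) = fact (l+i) / (fact i * fact l)"
    using binomial_fact[of i "l+i"] by simp
  have e: "exp(-(1+s)*b) = exp(-b) * exp(-(s*b))"
    by (simp add: exp_add[symmetric] algebra_simps)
  have p: "(1+s)^(Suc l + i) = ?P" by simp
  have pos: "?P \<noteq> 0" using assms by simp
  have gen: "\<And>c x B F P. (P::real) \<noteq> 0 \<Longrightarrow> c * x / P * (P * B / F) = c * x * B / F"
    by (simp add: field_simps)
  have "real ((l + i) choose i) * s^i / (1+s)^(Suc l + i) * ((1+s)^(Suc (l+i)) * b^(l+i) * exp(-(1+s)*b) / fact (l+i))
     = fact (l+i) / (fact i * fact l) * s^i * (b^(l+i) * exp(-(1+s)*b)) / fact (l+i)"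
    unfolding p c using gen[OF pos] assms by (simp add: mult.assoc)
  also have "\<dots> = s^i * (b^(l+i) * exp(-(1+s)*b)) / (fact i * fact l)"
    by (simp add: field_simps)
  also have "\<dots> = b^l * exp(-b) / fact l * ((s*b)^i * exp(-(s*b)) / fact i)"
    unfolding e by (simp add: field_simps power_add power_mult_distrib)
  finally show ?thesis by simp
qed

lemma termeq':
  fixes b s :: real and l i :: nat
  assumes "0 \<le> b" "0 \<le> s"
  shows "erlang_density l 1 b * ((s*b)^i * exp(-(s*b)) / fact i) =
    real ((l + i) choose i) * s^i / (1+s)^(Suc l + i) * erlang_density (l+i) (1+s) b"
proof -
  have e1: "erlang_density l 1 b = b^l * exp(-b) / fact l" using assms by (simp add: erlang_density_def)
  have e2: "erlang_density (l+i) (1+s) b = (1+s)^(Suc (l+i)) * b^(l+i) * exp(-(1+s)*b) / fact (l+i)"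
    using assms by (simp add: erlang_density_def)
  show ?thesis unfolding e1 e2 by (rule termeq[OF assms])
qed

lemma intC:
  fixes s :: real and l k :: nat
  assumes s: "0 \<le> s"
  shows "(\<integral>\<^sup>+b. ennreal (erlang_density l 1 b) * ennreal (\<Sum>i\<le>k. (s*b)^i * exp(-(s*b)) / fact i) * indicator {0<..} b \<partial>lborel)
    = ennreal (\<Sum>i\<le>k. real ((l+i) choose i) * s^i / (1+s)^(Suc l+i))"
proof -
  let ?c = "\<lambda>i. real ((l+i) choose i) * s^i / (1+s)^(Suc l+i)"
  have "(\<integral>\<^sup>+b. ennreal (erlang_density l 1 b) * ennreal (\<Sum>i\<le>k. (s*b)^i * exp(-(s*b)) / fact i) * indicator {0<..} b \<partial>lborel)
     = (\<integral>\<^sup>+b. (\<Sum>i\<le>k. ennreal (?c i) * ennreal (erlang_density (l+i) (1+s) b)) \<partial>lborel)"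
  proof (intro nn_integral_cong_AE, use AE_lborel_singleton[of 0] in eventually_elim)
    case (elim b)
    show ?case
    proof (cases "b < 0")
      case True
      then show ?thesis by (simp add: erlang_density_def)
    next
      case False
      with elim have b: "0 < b" by simp
      have "ennreal (erlang_density l 1 b) * ennreal (\<Sum>i\<le>k. (s*b)^i * exp(-(s*b)) / fact i)
        = ennreal (erlang_density l 1 b * (\<Sum>i\<le>k. (s*b)^i * exp(-(s*b)) / fact i))"
        using b s by (intro ennreal_mult[symmetric]) (auto intro!: sum_nonneg)
      also have "erlang_density l 1 b * (\<Sum>i\<le>k. (s*b)^i * exp(-(s*b)) / fact i)
          = (\<Sum>i\<le>k. ?c i * erlang_density (l+i) (1+s) b)"
        unfolding sum_distrib_left using b s
        by (intro sum.cong refl termeq') auto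
      also have "ennreal \<dots> = (\<Sum>i\<le>k. ennreal (?c i * erlang_density (l+i) (1+s) b))"
        using b s by (intro sum_ennreal[symmetric]) auto
      also have "\<dots> = (\<Sum>i\<le>k. ennreal (?c i) * ennreal (erlang_density (l+i) (1+s) b))"
        using b s by (intro sum.cong refl ennreal_mult) auto
      finally show ?thesis using b by simp
    qed
  qed
  also have "\<dots> = (\<Sum>i\<le>k. ennreal (?c i) * (\<integral>\<^sup>+b. ennreal (erlang_density (l+i) (1+s) b) \<partial>lborel))"
    by (subst nn_integral_sum) (auto intro!: sum.cong nn_integral_cmult)
  also have "\<dots> = (\<Sum>i\<le>k. ennreal (?c i))"
  proof (intro sum.cong refl)
    fix i assume "i \<in> {..k}"
    have "(\<integral>\<^sup>+b. ennreal (erlang_density (l+i) (1+s) b) \<partial>lborel) = 1"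
      using nn_integral_erlang_ith_moment[of "1+s" "l+i" 0] s by simp
    then show "ennreal (?c i) * (\<integral>\<^sup>+b. ennreal (erlang_density (l+i) (1+s) b) \<partial>lborel) = ennreal (?c i)" by simp
  qed
  also have "\<dots> = ennreal (\<Sum>i\<le>k. ?c i)"
    using s by (intro sum_ennreal) auto
  finally show ?thesis .
qed



lemma boundD:
  fixes t a :: real and m n :: nat
  assumes a: "0 < a" and t: "0 < t" and mn: "m + 1 \<le> n"
  shows "t^m / ((t+a)^n * (t+1)) \<le> (1 / (min a 1)^(n-m)) / (1+t)^2"
proof -
  define d where "d = n - m"
  define \<beta> where "\<beta> = min a 1"
  have d: "1 \<le> d" "n = m + d" using mn by (auto simp: d_def)
  have bpos: "0 < \<beta>" using a by (simp add: \<beta>_def)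
  have tb: "\<beta> * (t+1) \<le> t + a"
    using a t by (auto simp: \<beta>_def min_def algebra_simps intro: mult_left_le_one_le)
  have "t^m \<le> (t+a)^m" using a t by (intro power_mono) auto
  have "(\<beta> * (t+1))^d \<le> (t+a)^d" using tb bpos t by (intro power_mono) auto
  moreover have "(t+1) \<le> (t+1)^d" using d t by (intro self_le_power) auto
  ultimately have "\<beta>^d * (t+1) \<le> (t+a)^d"
    using bpos by (smt (verit) mult_left_mono power_mult_distrib zero_less_power)
  have "t^m / ((t+a)^n * (t+1)) = (t^m / (t+a)^m) * (1 / ((t+a)^d * (t+1)))"
    using a t d by (simp add: power_add field_simps)
  also have "\<dots> \<le> 1 * (1 / ((t+a)^d * (t+1)))"
    using \<open>t^m \<le> (t+a)^m\<close> a t by (intro mult_right_mono) (auto simp: divide_le_eq)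
  also have "\<dots> \<le> 1 / ((\<beta>^d * (t+1)) * (t+1))"
    using \<open>\<beta>^d * (t+1) \<le> (t+a)^d\<close> bpos t a
    by (simp, intro divide_left_mono mult_right_mono mult_pos_pos) auto
  also have "\<dots> = (1 / \<beta>^d) / (1+t)^2"
    by (simp add: power2_eq_square algebra_simps)
  finally show ?thesis by (simp add: \<beta>_def d_def)
qed

lemma intD:
  fixes a :: real and m n :: nat
  assumes a: "0 < a" and mn: "m + 1 \<le> n"
  shows "(\<integral>\<^sup>+t. ennreal (t^m / ((t+a)^n * (t+1))) * indicator {0<..} t \<partial>lborel) = ennreal (I2 a m n)"
proof -
  define q where "q t = t^m / ((t+a)^n * (t+1))" for t :: real
  define C where "C = 1 / (min a 1)^(n-m)"
  have Cpos: "0 < C" using a by (simp add: C_def)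
  have qnn: "0 < t \<Longrightarrow> 0 \<le> q t" for t using a by (simp add: q_def)
  have [measurable]: "q \<in> borel_measurable borel" unfolding q_def by measurable
  have lim: "((\<lambda>t::real. - C / (1+t)) \<longlongrightarrow> 0) at_top"
    by (intro tendsto_divide_0[OF tendsto_const] filterlim_at_top_imp_at_infinity
          filterlim_tendsto_add_at_top[OF tendsto_const filterlim_ident])
  have eq1: "(\<integral>\<^sup>+t. ennreal (q t) * indicator {0<..} t \<partial>lborel) = (\<integral>\<^sup>+t. ennreal (indicator {0<..} t * q t) \<partial>lborel)"
    by (intro nn_integral_cong) (auto simp: indicator_def)
  have "(\<integral>\<^sup>+t. ennreal (indicator {0<..} t * q t) \<partial>lborel) \<le> (\<integral>\<^sup>+t. ennreal (C / (1+t)^2) * indicator {0..} t \<partial>lborel)"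
    using boundD[OF a _ mn] by (intro nn_integral_mono) (auto simp: indicator_def q_def C_def intro!: ennreal_leI)
  also have "\<dots> = 0 - (- C / (1 + 0))"
    apply (rule nn_integral_FTC_atLeast[where F="\<lambda>t. - C / (1+t)"])
    using Cpos lim
       apply (auto intro!: derivative_eq_intros simp: power2_eq_square field_simps)
    done
  finally have fin: "(\<integral>\<^sup>+t. ennreal (indicator {0<..} t * q t) \<partial>lborel) < \<infinity>"
    by (metis ennreal_less_top infinity_ennreal_def le_less_trans)
  have int: "integrable lborel (\<lambda>t. indicator {0<..} t * q t)"
    by (rule integrableI_nonneg) (use fin qnn in \<open>auto simp: indicator_def\<close>)
  have "(\<integral>\<^sup>+t. ennreal (indicator {0<..} t * q t) \<partial>lborel) = ennreal (integral\<^sup>L lborel (\<lambda>t. indicator {0<..} t * q t))"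
    by (rule nn_integral_eq_integral[OF int]) (use qnn in \<open>auto simp: indicator_def\<close>)
  also have "integral\<^sup>L lborel (\<lambda>t. indicator {0<..} t * q t) = I2 a m n"
    by (simp add: I2_def set_lebesgue_integral_def q_def)
  finally show ?thesis using eq1 by (simp add: q_def)
qed


lemma AE_nonneg_erlang:
  assumes D: "distributed M lborel X (\<lambda>t. ennreal (erlang_density k l t))"
  shows "AE \<omega> in M. 0 \<le> X \<omega>"
proof -
  have [measurable]: "X \<in> borel_measurable M"
    using distributed_measurable[OF D] by simp
  have "(\<integral>\<^sup>+\<omega>. indicator {..<0} (X \<omega>) \<partial>M) = (\<integral>\<^sup>+x. ennreal (erlang_density k l x) * indicator {..<0} x \<partial>lborel)"
    by (rule distributed_nn_integral[OF D, symmetric]) simp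
  also have "\<dots> = (\<integral>\<^sup>+x. 0 \<partial>(lborel::real measure))"
    by (intro nn_integral_cong) (auto simp: erlang_density_def indicator_def)
  finally have "(\<integral>\<^sup>+\<omega>. indicator {..<0} (X \<omega>) \<partial>M) = 0" by simp
  then have "AE \<omega> in M. (indicator {..<0} (X \<omega>) :: ennreal) = 0"
    by (subst (asm) nn_integral_0_iff_AE) auto
  then show ?thesis
    by eventually_elim (auto simp: indicator_def split: if_splits)
qed

lemma algE:
  fixes a t :: real assumes a: "0 < a" and t: "0 < t"
  shows "(t/a)^i / (1 + t/a)^(L+i) = a^L * (t^i / (t+a)^(L+i))"
proof -
  have "1 + t/a = (t+a)/a" using a by (simp add: field_simps)
  then have "(t/a)^i / (1 + t/a)^(L+i) = (t^i / a^i) / ((t+a)^(L+i) / a^(L+i))"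
    by (simp add: power_divide)
  also have "\<dots> = a^L * (t^i / (t+a)^(L+i))"
    using a t by (simp add: field_simps power_add)
  finally show ?thesis .
qed

lemma inner_b:
  fixes t \<alpha> b :: real and k l :: nat
  assumes t: "0 < t" and a: "0 < \<alpha>"
  shows "(\<integral>\<^sup>+a. ennreal (erlang_density k 1 a) * ennreal (erlang_density l 1 b) * (if t < \<alpha> * a / b then 1 else 0) \<partial>lborel)
    = ennreal (erlang_density l 1 b) * ennreal (\<Sum>i\<le>k. ((t/\<alpha>)*b)^i * exp(-((t/\<alpha>)*b)) / fact i) * indicator {0<..} b"
proof (cases "0 < b")
  case True
  have "(\<integral>\<^sup>+a. ennreal (erlang_density k 1 a) * ennreal (erlang_density l 1 b) * (if t < \<alpha> * a / b then 1 else 0) \<partial>lborel)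
     = (\<integral>\<^sup>+a. ennreal (erlang_density l 1 b) * (ennreal (erlang_density k 1 a) * indicator {(t/\<alpha>)*b<..} a) \<partial>lborel)"
  proof (intro nn_integral_cong)
    fix a :: real
    have "t < \<alpha> * a / b \<longleftrightarrow> (t/\<alpha>)*b < a" using True a
      by (simp add: field_simps)
    then show "ennreal (erlang_density k 1 a) * ennreal (erlang_density l 1 b) * (if t < \<alpha> * a / b then 1 else 0)
      = ennreal (erlang_density l 1 b) * (ennreal (erlang_density k 1 a) * indicator {(t/\<alpha>)*b<..} a)"
      by (simp add: indicator_def mult_ac)
  qed
  also have "\<dots> = ennreal (erlang_density l 1 b) * (\<integral>\<^sup>+a. ennreal (erlang_density k 1 a) * indicator {(t/\<alpha>)*b<..} a \<partial>lborel)"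
    by (rule nn_integral_cmult) simp
  also have "\<dots> = ennreal (erlang_density l 1 b) * ennreal (\<Sum>i\<le>k. ((t/\<alpha>)*b)^i * exp(-((t/\<alpha>)*b)) / fact i)"
    using True t a by (subst ccdfB) auto
  finally show ?thesis using True by simp
next
  case False
  then have "b < 0 \<or> b = 0" by auto
  then show ?thesis
  proof
    assume "b < 0" then show ?thesis by (simp add: erlang_density_def)
  next
    assume "b = 0" then show ?thesis using t by simp
  qed
qed

lemma prob_t:
  fixes M :: "'a measure" and z y :: "'a \<Rightarrow> real" and t \<alpha> :: real and k l :: nat
  assumes D2: "distributed M (lborel \<Otimes>\<^sub>M lborel) (\<lambda>\<omega>. (z \<omega>, y \<omega>))
      (\<lambda>(a, b). ennreal (erlang_density k 1 a) * ennreal (erlang_density l 1 b))"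
    and t: "0 < t" and a: "0 < \<alpha>"
  shows "(\<integral>\<^sup>+\<omega>. (if t < \<alpha> * z \<omega> / y \<omega> then 1 else 0) \<partial>M)
     = ennreal (\<Sum>i\<le>k. real ((l+i) choose i) * (t/\<alpha>)^i / (1+t/\<alpha>)^(Suc l+i))"
proof -
  let ?G = "\<lambda>p::real\<times>real. (if t < \<alpha> * fst p / snd p then 1 else 0 :: ennreal)"
  have "(\<integral>\<^sup>+\<omega>. (if t < \<alpha> * z \<omega> / y \<omega> then 1 else 0) \<partial>M) = (\<integral>\<^sup>+\<omega>. ?G (z \<omega>, y \<omega>) \<partial>M)"
    by simp
  also have "\<dots> = (\<integral>\<^sup>+p. (case p of (a, b) \<Rightarrow> ennreal (erlang_density k 1 a) * ennreal (erlang_density l 1 b)) * ?G p \<partial>(lborel \<Otimes>\<^sub>M lborel))"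
    by (rule distributed_nn_integral[OF D2, symmetric]) simp
  also have "\<dots> = (\<integral>\<^sup>+b. \<integral>\<^sup>+a. ennreal (erlang_density k 1 a) * ennreal (erlang_density l 1 b) * (if t < \<alpha> * a / b then 1 else 0) \<partial>lborel \<partial>lborel)"
    by (subst lborel_pair.nn_integral_snd[symmetric]) (auto simp: case_prod_beta)
  also have "\<dots> = (\<integral>\<^sup>+b. ennreal (erlang_density l 1 b) * ennreal (\<Sum>i\<le>k. ((t/\<alpha>)*b)^i * exp(-((t/\<alpha>)*b)) / fact i) * indicator {0<..} b \<partial>lborel)"
    using t a by (intro nn_integral_cong inner_b) auto
  also have "\<dots> = ennreal (\<Sum>i\<le>k. real ((l+i) choose i) * (t/\<alpha>)^i / (1+t/\<alpha>)^(Suc l+i))"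
    using t a by (intro intC) auto
  finally show ?thesis .
qed

theorem mainTheorem3:
  fixes M :: "'a measure" and N L :: nat and \<alpha> :: real and z y :: "'a \<Rightarrow> real"
  assumes "prob_space M"
    and "1 \<le> L" and "L + 1 \<le> N"
    and "\<alpha> > 0"
    and "distributed M lborel z (\<lambda>t. ennreal (erlang_density (N - L - 1) 1 t))"
    and "distributed M lborel y (\<lambda>t. ennreal (erlang_density (L - 1) 1 t))"
    and "prob_space.indep_var M borel z borel y"
  shows "prob_space.expectation M (\<lambda>\<omega>. ln (1 + \<alpha> * z \<omega> / y \<omega>)) =
    (\<Sum>i = 0..N - L - 1. real ((L + i - 1) choose i) * \<alpha> ^ L * I2 \<alpha> i (L + i))"
proof -
  interpret P: prob_space M by fact
  obtain l where L: "L = Suc l" using assms(2) by (cases L) auto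
  define k where "k = N - L - 1"
  have a: "0 < \<alpha>" by fact
  have Dz: "distributed M lborel z (\<lambda>t. ennreal (erlang_density k 1 t))" using assms(5) by (simp add: k_def)
  have Dy: "distributed M lborel y (\<lambda>t. ennreal (erlang_density l 1 t))" using assms(6) by (simp add: L)
  have [measurable]: "z \<in> borel_measurable M" using distributed_measurable[OF Dz] by simp
  have [measurable]: "y \<in> borel_measurable M" using distributed_measurable[OF Dy] by simp
  have ind: "P.indep_var lborel z lborel y"
    using assms(7) unfolding P.indep_var_eq by simp
  have D2: "distributed M (lborel \<Otimes>\<^sub>M lborel) (\<lambda>\<omega>. (z \<omega>, y \<omega>))
      (\<lambda>(a, b). ennreal (erlang_density k 1 a) * ennreal (erlang_density l 1 b))"
    by (rule P.distributed_joint_indep[OF lborel.sigma_finite_measure_axioms lborel.sigma_finite_measure_axioms Dz Dy ind])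
  interpret PS: pair_sigma_finite M lborel
    by (simp add: pair_sigma_finite_def P.sigma_finite_measure_axioms lborel.sigma_finite_measure_axioms)
  define X where "X \<omega> = \<alpha> * z \<omega> / y \<omega>" for \<omega>
  have [measurable]: "X \<in> borel_measurable M" unfolding X_def by measurable
  have AEX: "AE \<omega> in M. 0 \<le> X \<omega>"
    using AE_nonneg_erlang[OF Dz] AE_nonneg_erlang[OF Dy]
    by eventually_elim (use a in \<open>auto simp: X_def\<close>)
  define F where "F \<omega> t = ennreal (1/(1+t)) * (if 0 < t \<and> t < X \<omega> then 1 else 0)" for \<omega> t
  have [measurable]: "case_prod F \<in> borel_measurable (M \<Otimes>\<^sub>M lborel)"
    unfolding F_def case_prod_beta by measurable
  define w where "w i = real ((l+i) choose i) * \<alpha>^L" for i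
  define q where "q i t = t^i / ((t+\<alpha>)^(L+i) * (t+1))" for i t
  have "(\<integral>\<^sup>+\<omega>. ennreal (ln (1 + X \<omega>)) \<partial>M) = (\<integral>\<^sup>+\<omega>. \<integral>\<^sup>+t. F \<omega> t \<partial>lborel \<partial>M)"
    using AEX by (intro nn_integral_cong_AE) (auto simp: F_def lnA elim!: eventually_mono)
  also have "\<dots> = (\<integral>\<^sup>+t. \<integral>\<^sup>+\<omega>. F \<omega> t \<partial>M \<partial>lborel)"
    by (rule PS.Fubini'[symmetric]) measurable
  also have "\<dots> = (\<integral>\<^sup>+t. (\<Sum>i\<le>k. ennreal (w i) * (ennreal (q i t) * indicator {0<..} t)) \<partial>lborel)"
  proof (intro nn_integral_cong)
    fix t :: real
    show "(\<integral>\<^sup>+\<omega>. F \<omega> t \<partial>M) = (\<Sum>i\<le>k. ennreal (w i) * (ennreal (q i t) * indicator {0<..} t))"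
    proof (cases "0 < t")
      case False
      then show ?thesis by (simp add: F_def)
    next
      case True
      have "(\<integral>\<^sup>+\<omega>. F \<omega> t \<partial>M) = (\<integral>\<^sup>+\<omega>. ennreal (1/(1+t)) * (if t < \<alpha> * z \<omega> / y \<omega> then 1 else 0) \<partial>M)"
        using True by (intro nn_integral_cong) (simp add: F_def X_def)
      also have "\<dots> = ennreal (1/(1+t)) * (\<integral>\<^sup>+\<omega>. (if t < \<alpha> * z \<omega> / y \<omega> then 1 else 0) \<partial>M)"
        by (rule nn_integral_cmult) measurable
      also have "\<dots> = ennreal (1/(1+t)) * ennreal (\<Sum>i\<le>k. real ((l+i) choose i) * (t/\<alpha>)^i / (1+t/\<alpha>)^(Suc l+i))"
        using prob_t[OF D2 True a] by simp
      also have "\<dots> = ennreal (\<Sum>i\<le>k. 1/(1+t) * (real ((l+i) choose i) * (t/\<alpha>)^i / (1+t/\<alpha>)^(Suc l+i)))"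
        using True a by (subst ennreal_mult[symmetric]) (auto intro!: sum_nonneg simp: sum_distrib_left)
      also have "\<dots> = ennreal (\<Sum>i\<le>k. w i * q i t)"
      proof (intro arg_cong[where f=ennreal] sum.cong refl)
        fix i
        have "(t/\<alpha>)^i / (1+t/\<alpha>)^(Suc l+i) = \<alpha>^L * (t^i / (t+\<alpha>)^(L+i))"
          using algE[OF a True, of i L] by (simp add: L)
        then have e: "real ((l+i) choose i) * (t/\<alpha>)^i / (1+t/\<alpha>)^(Suc l+i) = real ((l+i) choose i) * (\<alpha>^L * (t^i / (t+\<alpha>)^(L+i)))"
          by (simp only: times_divide_eq_right[symmetric])
        have n1: "(t+\<alpha>)^(L+i) \<noteq> 0" "1 + t \<noteq> 0" "t + 1 \<noteq> 0" using True a by auto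
        show "1/(1+t) * (real ((l+i) choose i) * (t/\<alpha>)^i / (1+t/\<alpha>)^(Suc l+i)) = w i * q i t"
          unfolding e w_def q_def using n1 by (simp add: field_simps)
      qed
      also have "\<dots> = (\<Sum>i\<le>k. ennreal (w i * q i t))"
        using True a by (intro sum_ennreal[symmetric]) (auto simp: w_def q_def)
      also have "\<dots> = (\<Sum>i\<le>k. ennreal (w i) * (ennreal (q i t) * indicator {0<..} t))"
      proof (intro sum.cong refl)
        fix i
        have "0 \<le> w i" "0 \<le> q i t" using True a by (auto simp: w_def q_def)
        then show "ennreal (w i * q i t) = ennreal (w i) * (ennreal (q i t) * indicator {0<..} t)"
          using True by (simp add: ennreal_mult)
      qed
      finally show ?thesis .
    qed
  qed
  also have "\<dots> = (\<Sum>i\<le>k. ennreal (w i) * (\<integral>\<^sup>+t. ennreal (q i t) * indicator {0<..} t \<partial>lborel))"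
    by (subst nn_integral_sum) (auto simp: q_def intro!: sum.cong nn_integral_cmult)
  also have "\<dots> = (\<Sum>i\<le>k. ennreal (w i) * ennreal (I2 \<alpha> i (L+i)))"
  proof (intro sum.cong refl)
    fix i
    have "(\<integral>\<^sup>+t. ennreal (q i t) * indicator {0<..} t \<partial>lborel) = ennreal (I2 \<alpha> i (L+i))"
      unfolding q_def by (rule intD[OF a]) (simp add: L)
    then show "ennreal (w i) * (\<integral>\<^sup>+t. ennreal (q i t) * indicator {0<..} t \<partial>lborel) = ennreal (w i) * ennreal (I2 \<alpha> i (L+i))"
      by simp
  qed
  also have "\<dots> = ennreal (\<Sum>i\<le>k. w i * I2 \<alpha> i (L+i))"
  proof -
    have I2nn: "0 \<le> I2 \<alpha> i n" for i n
      unfolding I2_def set_lebesgue_integral_def by (rule integral_nonneg_AE, rule AE_I2) (use a in \<open>auto simp: indicator_def\<close>)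
    have wnn: "0 \<le> w i" for i using a by (simp add: w_def)
    have "(\<Sum>i\<le>k. ennreal (w i) * ennreal (I2 \<alpha> i (L+i))) = (\<Sum>i\<le>k. ennreal (w i * I2 \<alpha> i (L+i)))"
      using wnn I2nn by (intro sum.cong refl) (simp add: ennreal_mult)
    also have "\<dots> = ennreal (\<Sum>i\<le>k. w i * I2 \<alpha> i (L+i))"
      using wnn I2nn by (intro sum_ennreal) simp
    finally show ?thesis .
  qed
  finally have nn: "(\<integral>\<^sup>+\<omega>. ennreal (ln (1 + X \<omega>)) \<partial>M) = ennreal (\<Sum>i\<le>k. w i * I2 \<alpha> i (L+i))" .
  have I2nn: "0 \<le> I2 \<alpha> i n" for i n
    unfolding I2_def set_lebesgue_integral_def by (rule integral_nonneg_AE, rule AE_I2) (use a in \<open>auto simp: indicator_def\<close>)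
  have "P.expectation (\<lambda>\<omega>. ln (1 + \<alpha> * z \<omega> / y \<omega>)) = P.expectation (\<lambda>\<omega>. ln (1 + X \<omega>))"
    by (simp add: X_def)
  also have "\<dots> = enn2real (\<integral>\<^sup>+\<omega>. ennreal (ln (1 + X \<omega>)) \<partial>M)"
    by (rule integral_eq_nn_integral) (use AEX in \<open>auto elim!: eventually_mono\<close>)
  also have "\<dots> = (\<Sum>i\<le>k. w i * I2 \<alpha> i (L+i))"
    unfolding nn using a I2nn by (intro enn2real_ennreal sum_nonneg) (auto simp: w_def)
  also have "\<dots> = (\<Sum>i = 0..N - L - 1. real ((L + i - 1) choose i) * \<alpha> ^ L * I2 \<alpha> i (L + i))"
    by (simp add: k_def w_def L atLeast0AtMost)
  finally show ?thesis .
qed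


end
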